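(* Let $\delta=(\delta_0,\dots,\delta_h)$ with $h\ge2$ be a characteristic $\delta$-sequence and let $k$ be an integer with $2\le k\le h$. Then (i) $\delta_k+M_k\in\Gamma(\delta_1,\dots,\delta_{k-1})$; (ii) $\delta_k+M_k-\delta_0\notin\Gamma(\delta_0,\dots,\delta_{k-1})$.
   Context: For a set $A$ of integers, $\Gamma(A)$ is the additive semigroup (containing $0$) generated by $A$. A characteristic $\delta$-sequence (in the sense of Abhyankar–Moh) is a sequence of positive integers $\delta_0,\dots,\delta_h$ such that, with $d_i=\gcd(\delta_0,\dots,\delta_{i-1})$ for $1\le i\le h+1$: $d_{h+1}=1$ and $d_i>d_{i+1}$ for $1\le i\le h$; $\delta_i\frac{d_i}{d_{i+1}}\in\Gamma(\delta_0,\dots,\delta_{i-1})$ for $1\le i\le h$; and $\delta_0>\delta_1$, $\delta_i\frac{d_i}{d_{i+1}}>\delta_{i+1}$ for $1\le i\le h-1$. The $q$- and $M$-sequences are defined by $M_1=-\delta_1$ and, for $i=2,\dots,h$, $q_i=\delta_{i-1}\frac{d_{i-1}}{d_i}-\delta_i$, $M_i=M_{i-1}+q_i$. *)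

theory Defs
  imports Main
begin

inductive_set Gamma :: "int set \<Rightarrow> int set" for A :: "int set" where
  zero: "0 \<in> Gamma A"
| add: "x \<in> Gamma A \<Longrightarrow> a \<in> A \<Longrightarrow> x + a \<in> Gamma A"

definition dseq :: "(nat \<Rightarrow> int) \<Rightarrow> nat \<Rightarrow> int" where
  "dseq \<delta> i = Gcd (\<delta> ` {0..<i})"

definition char_delta_seq :: "(nat \<Rightarrow> int) \<Rightarrow> nat \<Rightarrow> bool" where
  "char_delta_seq \<delta> h \<longleftrightarrow>
     (\<forall>i\<le>h. \<delta> i > 0) \<and>
     dseq \<delta> (h+1) = 1 \<and>
     (\<forall>i. 1 \<le> i \<and> i \<le> h \<longrightarrow> dseq \<delta> i > dseq \<delta> (i+1)) \<and>
     (\<forall>i. 1 \<le> i \<and> i \<le> h \<longrightarrow>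
        \<delta> i * (dseq \<delta> i div dseq \<delta> (i+1)) \<in> Gamma (\<delta> ` {0..<i})) \<and>
     \<delta> 0 > \<delta> 1 \<and>
     (\<forall>i. 1 \<le> i \<and> i \<le> h - 1 \<longrightarrow> \<delta> i * (dseq \<delta> i div dseq \<delta> (i+1)) > \<delta> (i+1))"

definition qseq :: "(nat \<Rightarrow> int) \<Rightarrow> nat \<Rightarrow> int" where
  "qseq \<delta> i = \<delta> (i-1) * (dseq \<delta> (i-1) div dseq \<delta> i) - \<delta> i"

fun Mseq :: "(nat \<Rightarrow> int) \<Rightarrow> nat \<Rightarrow> int" where
  "Mseq \<delta> 0 = 0"
| "Mseq \<delta> (Suc 0) = - \<delta> 1"
| "Mseq \<delta> (Suc (Suc n)) = Mseq \<delta> (Suc n) + qseq \<delta> (Suc (Suc n))"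

end

theory Submission
  imports Defs
begin

lemma Gamma_mono: "x \<in> Gamma A \<Longrightarrow> A \<subseteq> B \<Longrightarrow> x \<in> Gamma B"
  by (induction rule: Gamma.induct) (auto intro: Gamma.intros)

lemma Gamma_add: "y \<in> Gamma A \<Longrightarrow> x \<in> Gamma A \<Longrightarrow> x + y \<in> Gamma A"
proof (induction rule: Gamma.induct)
  case zero then show ?case by simp
next
  case (add y a)
  then show ?case using Gamma.add[of "x+y" A a] by (simp add: add.assoc)
qed

lemma Gamma_gen: "a \<in> A \<Longrightarrow> a \<in> Gamma A"
  using Gamma.add[OF Gamma.zero] by simp

lemma Gamma_nat_mult: "x \<in> Gamma A \<Longrightarrow> int n * x \<in> Gamma A"
  by (induction n) (auto intro: Gamma.intros Gamma_add simp: distrib_right)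

lemma Gamma_mult: "x \<in> Gamma A \<Longrightarrow> c \<ge> 0 \<Longrightarrow> c * x \<in> Gamma A"
  using Gamma_nat_mult[of x A "nat c"] by simp

lemma Gamma_sum: "finite S \<Longrightarrow> (\<And>i. i \<in> S \<Longrightarrow> f i \<in> Gamma A) \<Longrightarrow> sum f S \<in> Gamma A"
  by (induction rule: finite_induct) (auto intro: Gamma.intros Gamma_add)

lemma Gamma_dvd: "x \<in> Gamma A \<Longrightarrow> (\<And>a. a \<in> A \<Longrightarrow> d dvd a) \<Longrightarrow> d dvd x"
  by (induction rule: Gamma.induct) auto

lemma Gamma_insert: "x \<in> Gamma (insert b A) \<Longrightarrow> \<exists>g\<in>Gamma A. \<exists>c\<ge>0. x = g + c * b"
proof (induction rule: Gamma.induct)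
  case zero then show ?case by (intro bexI[of _ 0] exI[of _ 0]) (auto intro: Gamma.zero)
next
  case (add x a)
  then obtain g c where g: "g \<in> Gamma A" "c \<ge> 0" "x = g + c * b" by blast
  show ?case
  proof (cases "a = b")
    case True
    then show ?thesis using g by (intro bexI[of _ g] exI[of _ "c+1"]) (auto simp: distrib_right)
  next
    case False
    then have "a \<in> A" using add by auto
    then show ?thesis using g by (intro bexI[of _ "g + a"] exI[of _ c]) (auto intro: Gamma.add)
  qed
qed

lemma dseq_Suc: "dseq \<delta> (Suc m) = gcd (\<delta> m) (dseq \<delta> m)"
proof -
  have "{0..<Suc m} = insert m {0..<m}" by auto
  then show ?thesis unfolding dseq_def by simp
qed

lemma dseq_pos: assumes "\<delta> 0 > 0" "i \<ge> 1" shows "dseq \<delta> i > 0"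
proof -
  have "\<delta> 0 \<in> \<delta> ` {0..<i}" using assms by auto
  have "\<not> (\<delta> ` {0..<i} \<subseteq> {0})"
  proof
    assume "\<delta> ` {0..<i} \<subseteq> {0}"
    with \<open>\<delta> 0 \<in> \<delta> ` {0..<i}\<close> have "\<delta> 0 = 0" by blast
    with assms(1) show False by simp
  qed
  then have "dseq \<delta> i \<noteq> 0" unfolding dseq_def using Gcd_0_iff[of "\<delta> ` {0..<i}"] by simp
  moreover have "dseq \<delta> i \<ge> 0" unfolding dseq_def by (rule Gcd_int_greater_eq_0)
  ultimately show ?thesis by simp
qed

lemma dseq_dvd: "j < i \<Longrightarrow> dseq \<delta> i dvd \<delta> j"
  unfolding dseq_def by (rule Gcd_dvd) auto

definition nn :: "(nat \<Rightarrow> int) \<Rightarrow> nat \<Rightarrow> int" where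
  "nn \<delta> j = dseq \<delta> j div dseq \<delta> (j+1)"

lemma nn_facts:
  assumes "char_delta_seq \<delta> h" "1 \<le> j" "j \<le> h"
  shows "nn \<delta> j \<ge> 2" "dseq \<delta> j = nn \<delta> j * dseq \<delta> (j+1)"
    "nn \<delta> j * \<delta> j \<in> Gamma (\<delta> ` {0..<j})"
    "coprime (nn \<delta> j) (\<delta> j div dseq \<delta> (j+1))"
    "\<delta> j = (\<delta> j div dseq \<delta> (j+1)) * dseq \<delta> (j+1)"
proof -
  have d0: "\<delta> 0 > 0" using assms unfolding char_delta_seq_def by auto
  have p1: "dseq \<delta> (j+1) > 0" using dseq_pos[of \<delta> "j+1", OF d0] by simp
  have p0: "dseq \<delta> j > dseq \<delta> (j+1)" using assms unfolding char_delta_seq_def by auto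
  have g: "dseq \<delta> (j+1) = gcd (\<delta> j) (dseq \<delta> j)" using dseq_Suc by simp
  have dv: "dseq \<delta> (j+1) dvd dseq \<delta> j" using g by simp
  then show e: "dseq \<delta> j = nn \<delta> j * dseq \<delta> (j+1)" unfolding nn_def by simp
  have "nn \<delta> j > 1"
  proof (rule ccontr)
    assume "\<not> nn \<delta> j > 1"
    then have "nn \<delta> j \<le> 1" by simp
    then have "nn \<delta> j * dseq \<delta> (j+1) \<le> 1 * dseq \<delta> (j+1)"
      using p1 by (intro mult_right_mono) auto
    then show False using e p0 by simp
  qed
  then show "nn \<delta> j \<ge> 2" by simp
  show "nn \<delta> j * \<delta> j \<in> Gamma (\<delta> ` {0..<j})"
    using assms unfolding char_delta_seq_def nn_def by (auto simp: mult.commute)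
  have "coprime (\<delta> j div gcd (\<delta> j) (dseq \<delta> j)) (dseq \<delta> j div gcd (\<delta> j) (dseq \<delta> j))"
    by (rule div_gcd_coprime) (use p1 g in auto)
  then show "coprime (nn \<delta> j) (\<delta> j div dseq \<delta> (j+1))"
    unfolding nn_def g[symmetric] by (simp add: coprime_commute)
  have "dseq \<delta> (j+1) dvd \<delta> j" using g by simp
  then show "\<delta> j = (\<delta> j div dseq \<delta> (j+1)) * dseq \<delta> (j+1)" by simp
qed

lemma key:
  assumes ch: "char_delta_seq \<delta> h"
  shows "1 \<le> m \<Longrightarrow> m \<le> h + 1 \<Longrightarrow> a 0 < 0 \<Longrightarrow> (\<forall>j. 1 \<le> j \<and> j < m \<longrightarrow> 0 \<le> a j \<and> a j < nn \<delta> j)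
     \<Longrightarrow> a 0 * \<delta> 0 + (\<Sum>j\<in>{1..<m}. a j * \<delta> j) \<notin> Gamma (\<delta> ` {0..<m})"
proof (induction m rule: nat_induct_at_least)
  case base
  have d0: "\<delta> 0 > 0" using ch unfolding char_delta_seq_def by auto
  show ?case
  proof
    assume "a 0 * \<delta> 0 + (\<Sum>j\<in>{1..<1}. a j * \<delta> j) \<in> Gamma (\<delta> ` {0..<1})"
    then have x: "a 0 * \<delta> 0 \<in> Gamma {\<delta> 0}" by simp
    have "\<And>x. x \<in> Gamma {\<delta> 0} \<Longrightarrow> x \<ge> 0"
      by (erule Gamma.induct) (use d0 in auto)
    from this[OF x] have "a 0 * \<delta> 0 \<ge> 0" .
    then show False using base d0 by (simp add: mult_less_0_iff zero_le_mult_iff)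
  qed
next
  case (Suc m)
  let ?y' = "a 0 * \<delta> 0 + (\<Sum>j\<in>{1..<m}. a j * \<delta> j)"
  have IH: "?y' \<notin> Gamma (\<delta> ` {0..<m})" using Suc by auto
  have nf: "nn \<delta> m \<ge> 2" "dseq \<delta> m = nn \<delta> m * dseq \<delta> (m+1)"
    "nn \<delta> m * \<delta> m \<in> Gamma (\<delta> ` {0..<m})"
    "coprime (nn \<delta> m) (\<delta> m div dseq \<delta> (m+1))"
    "\<delta> m = (\<delta> m div dseq \<delta> (m+1)) * dseq \<delta> (m+1)"
  proof -
    have "1 \<le> m" "m \<le> h" using Suc by auto
    from nn_facts[OF ch this] show "nn \<delta> m \<ge> 2" "dseq \<delta> m = nn \<delta> m * dseq \<delta> (m+1)"
    "nn \<delta> m * \<delta> m \<in> Gamma (\<delta> ` {0..<m})"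
    "coprime (nn \<delta> m) (\<delta> m div dseq \<delta> (m+1))"
    "\<delta> m = (\<delta> m div dseq \<delta> (m+1)) * dseq \<delta> (m+1)" by blast+
  qed
  have am: "0 \<le> a m" "a m < nn \<delta> m" using Suc by auto
  have sumeq: "(\<Sum>j\<in>{1..<Suc m}. a j * \<delta> j) = (\<Sum>j\<in>{1..<m}. a j * \<delta> j) + a m * \<delta> m"
    using Suc by simp
  have seteq: "\<delta> ` {0..<Suc m} = insert (\<delta> m) (\<delta> ` {0..<m})"
    by (simp add: atLeast0_lessThan_Suc)
  show ?case
  proof
    assume "a 0 * \<delta> 0 + (\<Sum>j\<in>{1..<Suc m}. a j * \<delta> j) \<in> Gamma (\<delta> ` {0..<Suc m})"
    then have "?y' + a m * \<delta> m \<in> Gamma (insert (\<delta> m) (\<delta> ` {0..<m}))"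
      unfolding sumeq seteq by (simp add: add.assoc)
    from Gamma_insert[OF this] obtain g c where g: "g \<in> Gamma (\<delta> ` {0..<m})" "c \<ge> 0"
      "?y' + a m * \<delta> m = g + c * \<delta> m" by (elim bexE exE conjE) (rule that)
    define q r where "q = c div nn \<delta> m" and "r = c mod nn \<delta> m"
    have c: "c = q * nn \<delta> m + r" unfolding q_def r_def by (rule div_mult_mod_eq[symmetric])
    have np: "nn \<delta> m > 0" using nf(1) by linarith
    have r: "0 \<le> r" "r < nn \<delta> m" unfolding r_def using np by (rule pos_mod_sign, rule pos_mod_bound)
    have q: "q \<ge> 0" unfolding q_def by (subst pos_imp_zdiv_nonneg_iff[OF np]) (rule g(2))
    define g' where "g' = g + q * (nn \<delta> m * \<delta> m)"
    have g': "g' \<in> Gamma (\<delta> ` {0..<m})" unfolding g'_def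
      by (intro Gamma_add Gamma_mult nf(3) q g(1))
    have eq: "?y' + a m * \<delta> m = g' + r * \<delta> m" unfolding g'_def using g(3) c
      by (simp add: algebra_simps)
    have dg: "dseq \<delta> m dvd g'"
      by (rule Gamma_dvd[OF g']) (auto intro: dseq_dvd)
    have dy: "dseq \<delta> m dvd ?y'"
      by (intro dvd_add dvd_mult dseq_dvd dvd_sum) (use Suc in auto)
    have "(a m - r) * \<delta> m = g' - ?y'" using eq by (simp add: algebra_simps)
    then have "dseq \<delta> m dvd (a m - r) * \<delta> m" using dg dy by simp
    then have "nn \<delta> m * dseq \<delta> (m+1) dvd ((a m - r) * (\<delta> m div dseq \<delta> (m+1))) * dseq \<delta> (m+1)"
    proof -
      have X: "(a m - r) * \<delta> m = ((a m - r) * (\<delta> m div dseq \<delta> (m+1))) * dseq \<delta> (m+1)"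
        by (subst nf(5)) (simp only: mult.assoc)
      show ?thesis using \<open>dseq \<delta> m dvd (a m - r) * \<delta> m\<close>
        by (simp only: X[symmetric] nf(2)[symmetric])
    qed
    moreover have "dseq \<delta> (m+1) \<noteq> 0"
    proof -
      have "\<delta> 0 > 0" using ch unfolding char_delta_seq_def by blast
      from dseq_pos[of \<delta> "m+1", OF this] show ?thesis by simp
    qed
    ultimately have "nn \<delta> m dvd (a m - r) * (\<delta> m div dseq \<delta> (m+1))" by simp
    then have "nn \<delta> m dvd (a m - r)" using nf(4) coprime_dvd_mult_left_iff by blast
    then obtain t where t: "a m - r = nn \<delta> m * t" by (auto elim: dvdE)
    have "t = 0"
    proof (rule ccontr)
      assume "t \<noteq> 0"
      then have "\<bar>nn \<delta> m * t\<bar> \<ge> nn \<delta> m" using nf(1) by (simp add: abs_mult)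
      then show False using t am r by simp
    qed
    then have "a m = r" using t by simp
    then have "?y' = g'" using eq by simp
    then show False using IH g' by simp
  qed
qed

lemma Msum: "k \<ge> 1 \<Longrightarrow> \<delta> k + Mseq \<delta> k = (\<Sum>j\<in>{1..<k}. (nn \<delta> j - 1) * \<delta> j)"
proof (induction k rule: nat_induct_at_least)
  case base then show ?case by simp
next
  case (Suc m)
  then obtain n where n: "m = Suc n" by (cases m) auto
  have "\<delta> (Suc m) + Mseq \<delta> (Suc m) = (\<delta> m + Mseq \<delta> m) + (nn \<delta> m - 1) * \<delta> m"
    unfolding n by (simp add: qseq_def nn_def algebra_simps)
  then show ?case using Suc by simp
qed

theorem lemma7p1:
  fixes \<delta> :: "nat \<Rightarrow> int" and h k :: nat
  assumes "char_delta_seq \<delta> h" and "h \<ge> 2" and "2 \<le> k" and "k \<le> h"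
  shows "\<delta> k + Mseq \<delta> k \<in> Gamma (\<delta> ` {1..<k}) \<and>
         \<delta> k + Mseq \<delta> k - \<delta> 0 \<notin> Gamma (\<delta> ` {0..<k})"
proof
  have M: "\<delta> k + Mseq \<delta> k = (\<Sum>j\<in>{1..<k}. (nn \<delta> j - 1) * \<delta> j)"
    using Msum assms by simp
  have nj: "\<And>j. j \<in> {1..<k} \<Longrightarrow> nn \<delta> j \<ge> 2"
    using nn_facts(1)[OF assms(1)] assms by auto
  show "\<delta> k + Mseq \<delta> k \<in> Gamma (\<delta> ` {1..<k})"
    unfolding M
  proof (intro Gamma_sum Gamma_mult Gamma_gen)
    fix j assume j: "j \<in> {1..<k}"
    then show "\<delta> j \<in> \<delta> ` {1..<k}" by blast
    show "0 \<le> nn \<delta> j - 1" using nj[OF j] by simp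
  qed simp
  define a where "a = (\<lambda>j. if j = 0 then -1 else nn \<delta> j - 1)"
  have "a 0 * \<delta> 0 + (\<Sum>j\<in>{1..<k}. a j * \<delta> j) \<notin> Gamma (\<delta> ` {0..<k})"
  proof (rule key[OF assms(1)])
    show "\<forall>j. 1 \<le> j \<and> j < k \<longrightarrow> 0 \<le> a j \<and> a j < nn \<delta> j"
    proof (intro allI impI)
      fix j assume "1 \<le> j \<and> j < k"
      then have "nn \<delta> j \<ge> 2" "j \<noteq> 0" using nj by auto
      then show "0 \<le> a j \<and> a j < nn \<delta> j" unfolding a_def by simp
    qed
  qed (use assms in \<open>auto simp: a_def\<close>)
  moreover have "(\<Sum>j\<in>{1..<k}. a j * \<delta> j) = (\<Sum>j\<in>{1..<k}. (nn \<delta> j - 1) * \<delta> j)"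
    by (rule sum.cong) (auto simp: a_def)
  ultimately show "\<delta> k + Mseq \<delta> k - \<delta> 0 \<notin> Gamma (\<delta> ` {0..<k})"
    unfolding M by (simp add: a_def)
qed

end
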